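(* (a) $\lim_{\sigma\to0}\sup\{\gamma(\omega_{\sigma,y}):y\in\mathbb{R}^3\}=0$; (b) for every $r>0$, $\lim_{\sigma\to\infty}\inf\{\gamma(\omega_{\sigma,y}):y\in\mathbb{R}^3,\ |y|\le r\}=1$; (c) $(\beta(\omega_{\sigma,y})\,|\,y)_{\mathbb{R}^3}>0$ for all $y\in\mathbb{R}^3\setminus\{0\}$ and all $\sigma>0$.
   Context: $(\cdot|\cdot)_{\mathbb{R}^3}$ is the Euclidean scalar product. For $u\in L^6(\mathbb{R}^3)\setminus\{0\}$: $\beta(u)=\frac1{|u|_6^6}\int_{\mathbb{R}^3}\frac{x}{1+|x|}u^6dx$, $\gamma(u)=\frac1{|u|_6^6}\int_{\mathbb{R}^3}\left|\frac{x}{1+|x|}-\beta(u)\right|u^6dx$. $\omega\in C_0^\infty(B_1(0))$, $\omega\not\equiv0$, $\omega\ge0$, $\omega$ radial with $|x_1|\le|x_2|\Rightarrow\omega(x_1)\ge\omega(x_2)$ (in the paper $\omega$ additionally lies on the Nehari manifold of $\frac12\int|\nabla u|^2-\frac16\int u^6$ with energy in a prescribed interval $(\frac13S^{3/2},\bar c)$). For $\sigma>0$, $y\in\mathbb{R}^3$: $\omega_{\sigma,y}(x)=\sigma^{-1/2}\omega((x-y)/\sigma)$ for $x\in B_\sigma(y)$, $0$ otherwise. *)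

theory Defs
  imports "HOL-Analysis.Analysis"
begin

text \<open>C-infinity functions R^3 -> R: differentiable everywhere, and every first
  partial derivative is again C-infinity (greatest fixed point).\<close>
coinductive smooth3 :: "(real^3 \<Rightarrow> real) \<Rightarrow> bool" where
  "(\<forall>x. f differentiable (at x)) \<Longrightarrow>
   (\<forall>v\<in>(Basis :: (real^3) set). smooth3 (\<lambda>x. frechet_derivative f (at x) v)) \<Longrightarrow>
   smooth3 f"

definition L6pow6 :: "(real^3 \<Rightarrow> real) \<Rightarrow> real" where
  "L6pow6 u = (\<integral>x. \<bar>u x\<bar> ^ 6 \<partial>lborel)"

definition beta :: "(real^3 \<Rightarrow> real) \<Rightarrow> real^3" where
  "beta u = (1 / L6pow6 u) *\<^sub>R (\<integral>x. (u x ^ 6) *\<^sub>R ((1 / (1 + norm x)) *\<^sub>R x) \<partial>lborel)"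

definition gamma :: "(real^3 \<Rightarrow> real) \<Rightarrow> real" where
  "gamma u = (1 / L6pow6 u) *
     (\<integral>x. norm ((1 / (1 + norm x)) *\<^sub>R x - beta u) * u x ^ 6 \<partial>lborel)"

definition omega_sy :: "(real^3 \<Rightarrow> real) \<Rightarrow> real \<Rightarrow> real^3 \<Rightarrow> real^3 \<Rightarrow> real" where
  "omega_sy \<omega> \<sigma> y x =
     (if x \<in> ball y \<sigma> then \<sigma> powr (-1/2) * \<omega> ((1/\<sigma>) *\<^sub>R (x - y)) else 0)"

end

theory Submission
  imports Defs "HOL-Real_Asymp.Real_Asymp"
begin


lemma integral_affine3:
  fixes f :: "real^3 \<Rightarrow> 'b::{banach, second_countable_topology}"
  assumes f: "integrable lborel f" and c: "c \<noteq> 0"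
  shows "integrable lborel (\<lambda>x. f (t + c *\<^sub>R x))"
    and "(\<integral>x. f x \<partial>lborel) = \<bar>c\<bar>^3 *\<^sub>R (\<integral>x. f (t + c *\<^sub>R x) \<partial>lborel)"
proof -
  have [measurable]: "f \<in> borel_measurable borel" using f by auto
  have eq: "lborel = density (distr lborel borel (\<lambda>x. t + c *\<^sub>R x)) (\<lambda>_. \<bar>c\<bar>^3)"
    using lborel_affine[OF c, of t] by simp
  have "integrable (density (distr lborel borel (\<lambda>x. t + c *\<^sub>R x)) (\<lambda>_. \<bar>c\<bar>^3)) f"
    using f eq by simp
  then have "integrable (distr lborel borel (\<lambda>x. t + c *\<^sub>R x)) (\<lambda>x. \<bar>c\<bar>^3 *\<^sub>R f x)"
    by (subst (asm) integrable_density) auto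
  then have "integrable lborel (\<lambda>x. \<bar>c\<bar>^3 *\<^sub>R f (t + c *\<^sub>R x))"
    by (subst (asm) integrable_distr_eq) auto
  from integrable_scaleR_right[OF this, of "1 / \<bar>c\<bar>^3"]
  show i: "integrable lborel (\<lambda>x. f (t + c *\<^sub>R x))"
    using c by simp
  show "(\<integral>x. f x \<partial>lborel) = \<bar>c\<bar>^3 *\<^sub>R (\<integral>x. f (t + c *\<^sub>R x) \<partial>lborel)"
    apply (subst eq)
    using i by (simp add: integral_density integral_distr)
qed

lemma integral_pos_cont:
  fixes f :: "real^3 \<Rightarrow> real"
  assumes cont: "continuous_on UNIV f" and int: "integrable lborel f"
    and nn: "\<And>x. f x \<ge> 0" and pos: "f a > 0"
  shows "(\<integral>x. f x \<partial>lborel) > 0"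
proof -
  obtain d where d: "d > 0" "\<And>x. dist x a < d \<Longrightarrow> dist (f x) (f a) < f a / 2"
    using cont pos unfolding continuous_on_iff by (metis UNIV_I half_gt_zero)
  have le: "indicator (ball a d) x * (f a / 2) \<le> f x" for x
    using d(2)[of x] nn[of x] by (auto simp: indicator_def dist_commute dist_real_def abs_if split: if_splits)
  have "0 < measure lborel (ball a d) * (f a / 2)"
    using content_ball_pos[OF d(1), of a] pos by simp
  also have "\<dots> = (\<integral>x. indicator (ball a d) x * (f a / 2) \<partial>lborel)"
    by simp
  also have "\<dots> \<le> (\<integral>x. f x \<partial>lborel)"
    by (rule integral_mono[OF _ int le]) (intro integrable_mult_left integrable_real_indicator emeasure_lborel_ball_finite; simp)
  finally show ?thesis .
qed




definition hh :: "real^3 \<Rightarrow> real^3" where "hh x = (1 / (1 + norm x)) *\<^sub>R x"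

lemma dls: "(x::real) \<ge> 0 \<Longrightarrow> n \<ge> 0 \<Longrightarrow> x / (1 + n) \<le> x"
proof -
  assume x: "x \<ge> 0" and n: "n \<ge> 0"
  have "x \<le> x * (1 + n)" using x n by (simp add: algebra_simps)
  then show ?thesis using n by (simp add: divide_le_eq add_pos_nonneg)
qed

lemma hh_norm: "norm (hh x) = 1 - 1 / (1 + norm x)"
proof -
  have "1 + norm x > 0" by (simp add: add_pos_nonneg)
  then show ?thesis by (simp add: hh_def field_simps)
qed

lemma hh_norm_le: "norm (hh x) \<le> 1"
  unfolding hh_norm by simp

lemma hh_cont[continuous_intros]: "continuous_on S f \<Longrightarrow> continuous_on S (\<lambda>x. hh (f x))"
  unfolding hh_def
  by (intro continuous_intros) (auto, smt (verit) norm_ge_zero)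

lemma hh_lip: "norm (hh a - hh b) \<le> 2 * norm (a - b) / (1 + norm a)"
proof -
  define p where "p = 1 + norm a"
  define q where "q = 1 + norm b"
  have p: "p > 0" "p \<ge> 1" and q: "q > 0" "q \<ge> 1" by (auto simp: p_def q_def add_pos_nonneg)
  have eq: "hh a - hh b = (1/p) *\<^sub>R (a - b) + ((1/p - 1/q)) *\<^sub>R b"
    by (simp add: hh_def p_def q_def algebra_simps)
  have "norm (hh a - hh b) \<le> norm (a-b) / p + \<bar>1/p - 1/q\<bar> * norm b"
  proof -
    have "norm ((1/p) *\<^sub>R (a - b)) = norm (a-b) / p" using p by simp
    moreover have "norm ((1/p - 1/q) *\<^sub>R b) = \<bar>1/p - 1/q\<bar> * norm b" by simp
    ultimately show ?thesis unfolding eq by (metis norm_triangle_ineq)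
  qed
  also have "\<bar>1/p - 1/q\<bar> * norm b = \<bar>q - p\<bar> / p * (norm b / q)"
    using p q by (simp add: field_simps abs_mult abs_divide)
  also have "\<dots> \<le> norm (a - b) / p * 1"
  proof (rule mult_mono)
    have "\<bar>q - p\<bar> \<le> norm (a - b)"
      unfolding p_def q_def using norm_triangle_ineq3[of b a] norm_triangle_ineq3[of a b]
      by (simp add: norm_minus_commute)
    then show "\<bar>q - p\<bar> / p \<le> norm (a - b) / p" using p by (simp add: divide_right_mono)
    show "norm b / q \<le> 1" using q by (simp add: q_def)
  qed (use p q in auto)
  finally show ?thesis by (simp add: p_def)
qed

lemma hh_pair:
  fixes y z :: "real^3"
  shows "(hh (y + z) + hh (y - z)) \<bullet> y \<ge> 0"
proof -
  define a where "a = norm (y + z)"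
  define b where "b = norm (y - z)"
  define c where "c = y \<bullet> y"
  define t where "t = z \<bullet> y"
  have a0: "a \<ge> 0" and b0: "b \<ge> 0" by (auto simp: a_def b_def)
  have c0: "c \<ge> 0" by (simp add: c_def)
  have a2: "a^2 = c + 2*t + z \<bullet> z"
    by (simp add: a_def c_def t_def power2_norm_eq_inner algebra_simps inner_commute)
  have b2: "b^2 = c - 2*t + z \<bullet> z"
    by (simp add: b_def c_def t_def power2_norm_eq_inner algebra_simps inner_commute)
  have ab: "\<bar>a - b\<bar> \<le> 2 * norm y"
  proof -
    have e1: "y + z = 2 *\<^sub>R y - (y - z)" and e2: "y - z = 2 *\<^sub>R y - (y + z)"
      by (simp_all add: algebra_simps scaleR_2)
    have 1: "a \<le> b + norm (2 *\<^sub>R y)"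
      unfolding a_def b_def using norm_triangle_ineq4[of "2 *\<^sub>R y" "y - z", folded e1] by linarith
    have 2: "b \<le> a + norm (2 *\<^sub>R y)"
      unfolding a_def b_def using norm_triangle_ineq4[of "2 *\<^sub>R y" "y + z", folded e2] by linarith
    show ?thesis using 1 2 by simp
  qed
  have ab2: "(a - b)^2 \<le> 4 * c"
  proof -
    have "(a-b)^2 = \<bar>a - b\<bar>^2" by simp
    also have "\<dots> \<le> (2 * norm y)^2" using ab by (intro power_mono) auto
    also have "\<dots> = 4 * c" by (simp add: c_def power2_norm_eq_inner power_mult_distrib)
    finally show ?thesis .
  qed
  have key: "t * (a - b) * 4 = (a - b)^2 * (a + b)"
  proof -
    have "4 * t = a^2 - b^2" using a2 b2 by simp
    have "(a - b)^2 * (a + b) = (a - b) * (a^2 - b^2)" by (simp add: power2_eq_square algebra_simps)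
    also have "\<dots> = (a - b) * (4 * t)" using \<open>4 * t = a^2 - b^2\<close> by simp
    finally show ?thesis by simp
  qed
  have "t * (a - b) \<le> c * (a + b)"
  proof -
    have "(a - b)^2 * (a + b) \<le> (4 * c) * (a + b)" using ab2 a0 b0 by (intro mult_right_mono) auto
    then show ?thesis using key by simp
  qed
  then have E: "0 \<le> (c + t) * (1 + b) + (c - t) * (1 + a)"
    using c0 by (simp add: algebra_simps)
  have "(hh (y + z) + hh (y - z)) \<bullet> y = (c + t) / (1 + a) + (c - t) / (1 + b)"
    by (simp add: hh_def a_def b_def c_def t_def inner_add_left inner_diff_left inner_commute[of z y] add_divide_distrib diff_divide_distrib)
  also have "\<dots> = ((c + t) * (1 + b) + (c - t) * (1 + a)) / ((1 + a) * (1 + b))"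
    using a0 b0 by (simp add: field_simps)
  also have "\<dots> \<ge> 0" using E a0 b0 by simp
  finally show ?thesis .
qed




locale wset =
  fixes \<omega> :: "real^3 \<Rightarrow> real"
  assumes cont: "continuous_on UNIV \<omega>"
    and supp0: "\<And>x. \<omega> x \<noteq> 0 \<Longrightarrow> norm x < 1"
    and nn: "\<And>x. \<omega> x \<ge> 0"
    and refl: "\<And>x. \<omega> (- x) = \<omega> x"
    and pos0: "\<omega> 0 > 0"
begin

definition K where "K = (\<integral>z. \<omega> z ^ 6 \<partial>lborel)"

lemma meas[measurable]: "\<omega> \<in> borel_measurable borel"
  by (rule borel_measurable_continuous_onI[OF cont])

lemma int_w:
  fixes g :: "real^3 \<Rightarrow> 'b::{banach, second_countable_topology}"
  assumes g: "continuous_on UNIV g"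
  shows "integrable lborel (\<lambda>z. \<omega> z ^ 6 *\<^sub>R g z)"
proof -
  have eq: "(\<lambda>z. \<omega> z ^ 6 *\<^sub>R g z) = (\<lambda>z. indicator (cball 0 1) z *\<^sub>R (\<omega> z ^ 6 *\<^sub>R g z))"
  proof
    fix z show "\<omega> z ^ 6 *\<^sub>R g z = indicator (cball 0 1) z *\<^sub>R (\<omega> z ^ 6 *\<^sub>R g z)"
      using supp0[of z] by (cases "\<omega> z = 0") (auto simp: indicator_def)
  qed
  show ?thesis unfolding eq
    by (rule borel_integrable_compact) (auto intro!: continuous_intros continuous_on_subset[OF cont] continuous_on_subset[OF g])
qed

lemma int_w_real:
  fixes g :: "real^3 \<Rightarrow> real"
  assumes g: "continuous_on UNIV g"
  shows "integrable lborel (\<lambda>z. \<omega> z ^ 6 * g z)"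
  using int_w[OF g] by simp

lemma K_pos: "K > 0"
  unfolding K_def
  by (rule integral_pos_cont[where a=0])
     (use pos0 nn int_w_real[of "\<lambda>_. 1"] in \<open>auto intro!: continuous_intros cont\<close>)

lemma u6:
  assumes s: "\<sigma> > 0"
  shows "omega_sy \<omega> \<sigma> y x ^ 6 = (1 / \<sigma>^3) * \<omega> ((1/\<sigma>) *\<^sub>R (x - y)) ^ 6"
proof (cases "x \<in> ball y \<sigma>")
  case True
  have "(\<sigma> powr (-1/2)) ^ 6 = \<sigma> powr (-3)"
    using s by (subst powr_power) auto
  also have "\<dots> = 1 / \<sigma>^3" using s by (simp add: powr_minus powr_realpow inverse_eq_divide)
  finally show ?thesis using True by (simp add: omega_sy_def power_mult_distrib)
next
  case False
  then have "dist y x \<ge> \<sigma>" by auto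
  then have "norm ((1/\<sigma>) *\<^sub>R (x - y)) \<ge> 1"
  proof -
    have "norm ((1/\<sigma>) *\<^sub>R (x - y)) = norm (x - y) / \<sigma>" using s by simp
    also have "\<dots> \<ge> 1" using \<open>dist y x \<ge> \<sigma>\<close> s by (simp add: dist_norm norm_minus_commute)
    finally show ?thesis .
  qed
  then have "\<omega> ((1/\<sigma>) *\<^sub>R (x - y)) = 0" using supp0 by force
  then show ?thesis using False by (simp add: omega_sy_def)
qed

lemma transfer:
  fixes g :: "real^3 \<Rightarrow> 'b::{banach, second_countable_topology}"
  assumes s: "\<sigma> > 0" and g: "continuous_on UNIV g"
  shows "(\<integral>x. omega_sy \<omega> \<sigma> y x ^ 6 *\<^sub>R g x \<partial>lborel) = (\<integral>z. \<omega> z ^ 6 *\<^sub>R g (y + \<sigma> *\<^sub>R z) \<partial>lborel)"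
proof -
  define k where "k z = \<omega> z ^ 6 *\<^sub>R g (y + \<sigma> *\<^sub>R z)" for z
  have ki: "integrable lborel k"
    unfolding k_def by (rule int_w) (auto intro!: continuous_intros continuous_on_compose2[OF g])
  have e: "k (- (1/\<sigma>) *\<^sub>R y + (1/\<sigma>) *\<^sub>R x) = \<omega> ((1/\<sigma>) *\<^sub>R (x - y)) ^ 6 *\<^sub>R g x" for x
    using s by (simp add: k_def algebra_simps)
  have "(\<integral>z. k z \<partial>lborel) = \<bar>1/\<sigma>\<bar>^3 *\<^sub>R (\<integral>x. k (- (1/\<sigma>) *\<^sub>R y + (1/\<sigma>) *\<^sub>R x) \<partial>lborel)"
    by (rule integral_affine3(2)[OF ki]) (use s in auto)
  also have "\<dots> = (\<integral>x. omega_sy \<omega> \<sigma> y x ^ 6 *\<^sub>R g x \<partial>lborel)"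
  proof -
    have e2: "omega_sy \<omega> \<sigma> y x ^ 6 *\<^sub>R g x = \<bar>1/\<sigma>\<bar>^3 *\<^sub>R k (- (1/\<sigma>) *\<^sub>R y + (1/\<sigma>) *\<^sub>R x)" for x
      unfolding e u6[OF s] using s by (simp add: power_divide)
    show ?thesis unfolding e2 by simp
  qed
  finally show ?thesis by (simp add: k_def)
qed

lemma reflect:
  fixes f :: "real^3 \<Rightarrow> 'b::{banach, second_countable_topology}"
  assumes "integrable lborel f"
  shows "(\<integral>z. f (- z) \<partial>lborel) = (\<integral>z. f z \<partial>lborel)"
  using integral_affine3(2)[OF assms, of "-1" 0] by simp

end



context wset begin

lemma hh_c: "continuous_on UNIV hh"
  using hh_cont[OF continuous_on_id] by simp

lemma L6: assumes s: "\<sigma> > 0" shows "L6pow6 (omega_sy \<omega> \<sigma> y) = K"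
proof -
  have "L6pow6 (omega_sy \<omega> \<sigma> y) = (\<integral>x. omega_sy \<omega> \<sigma> y x ^ 6 *\<^sub>R (\<lambda>_. 1::real) x \<partial>lborel)"
    unfolding L6pow6_def by (simp add: power_even_abs_numeral)
  also have "\<dots> = K" unfolding transfer[OF s continuous_on_const] K_def by simp
  finally show ?thesis .
qed

lemma beta_eq: assumes s: "\<sigma> > 0"
  shows "beta (omega_sy \<omega> \<sigma> y) = (1/K) *\<^sub>R (\<integral>z. \<omega> z ^ 6 *\<^sub>R hh (y + \<sigma> *\<^sub>R z) \<partial>lborel)"
proof -
  have "(\<integral>x. (omega_sy \<omega> \<sigma> y x ^ 6) *\<^sub>R ((1 / (1 + norm x)) *\<^sub>R x) \<partial>lborel)
     = (\<integral>x. (omega_sy \<omega> \<sigma> y x ^ 6) *\<^sub>R hh x \<partial>lborel)" by (simp add: hh_def)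
  also have "\<dots> = (\<integral>z. \<omega> z ^ 6 *\<^sub>R hh (y + \<sigma> *\<^sub>R z) \<partial>lborel)"
    by (rule transfer[OF s hh_c])
  finally show ?thesis unfolding beta_def L6[OF s] by simp
qed

lemma gamma_eq: assumes s: "\<sigma> > 0"
  shows "gamma (omega_sy \<omega> \<sigma> y) = (1/K) * (\<integral>z. \<omega> z ^ 6 * norm (hh (y + \<sigma> *\<^sub>R z) - beta (omega_sy \<omega> \<sigma> y)) \<partial>lborel)"
proof -
  define b where "b = beta (omega_sy \<omega> \<sigma> y)"
  have c: "continuous_on UNIV (\<lambda>x. norm (hh x - b))"
    by (intro continuous_intros hh_c)
  have "(\<integral>x. norm ((1 / (1 + norm x)) *\<^sub>R x - b) * omega_sy \<omega> \<sigma> y x ^ 6 \<partial>lborel)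
     = (\<integral>x. (omega_sy \<omega> \<sigma> y x ^ 6) *\<^sub>R (\<lambda>x. norm (hh x - b)) x \<partial>lborel)" by (simp add: hh_def mult.commute)
  also have "\<dots> = (\<integral>z. \<omega> z ^ 6 *\<^sub>R (\<lambda>x. norm (hh x - b)) (y + \<sigma> *\<^sub>R z) \<partial>lborel)"
    by (rule transfer[OF s c])
  finally show ?thesis unfolding gamma_def L6[OF s] b_def by simp
qed

lemma part_c: assumes s: "\<sigma> > 0" and y: "y \<noteq> 0"
  shows "beta (omega_sy \<omega> \<sigma> y) \<bullet> y > 0"
proof -
  define F where "F z = \<omega> z ^ 6 * (hh (y + \<sigma> *\<^sub>R z) \<bullet> y)" for z
  have Fc: "continuous_on UNIV F" unfolding F_def
    by (intro continuous_intros cont hh_cont)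
  have Fi: "integrable lborel F" unfolding F_def
    by (rule int_w_real) (intro continuous_intros hh_cont)
  have Fi2: "integrable lborel (\<lambda>z. F (- z))"
    using integral_affine3(1)[OF Fi, of "-1" 0] by simp
  have i1: "integrable lborel (\<lambda>z. \<omega> z ^ 6 *\<^sub>R hh (y + \<sigma> *\<^sub>R z))"
    by (rule int_w) (intro continuous_intros hh_cont)
  have b: "beta (omega_sy \<omega> \<sigma> y) \<bullet> y = (1/K) * (\<integral>z. F z \<partial>lborel)"
    unfolding beta_eq[OF s] F_def using integral_inner_left[of y lborel "\<lambda>z. \<omega> z ^ 6 *\<^sub>R hh (y + \<sigma> *\<^sub>R z)", OF i1] by simp
  have "0 < (\<integral>z. F z + F (- z) \<partial>lborel)"
  proof (rule integral_pos_cont[where a=0])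
    show "continuous_on UNIV (\<lambda>z. F z + F (- z))"
      using Fc by (intro continuous_intros continuous_on_compose2[OF Fc]) auto
    show "integrable lborel (\<lambda>z. F z + F (- z))" using Fi Fi2 by simp
    show "0 \<le> F z + F (- z)" for z
    proof -
      have "F z + F (- z) = \<omega> z ^ 6 * ((hh (y + \<sigma> *\<^sub>R z) + hh (y - \<sigma> *\<^sub>R z)) \<bullet> y)"
        unfolding F_def by (simp add: refl inner_add_left algebra_simps)
      also have "\<dots> \<ge> 0" using hh_pair[of y "\<sigma> *\<^sub>R z"] nn[of z] by simp
      finally show ?thesis .
    qed
    have "hh y \<bullet> y > 0" using y by (simp add: hh_def add_pos_nonneg)
    then show "0 < F 0 + F (- 0)" unfolding F_def using pos0 by simp
  qed
  also have "\<dots> = 2 * (\<integral>z. F z \<partial>lborel)"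
    using Fi Fi2 reflect[OF Fi] by simp
  finally have "(\<integral>z. F z \<partial>lborel) > 0" by simp
  then show ?thesis unfolding b using K_pos by simp
qed

end



context wset begin

lemma K_eq: "(\<integral>z. \<omega> z ^ 6 * c \<partial>lborel) = K * c"
  unfolding K_def by simp

lemma gamma_nonneg: assumes s: "\<sigma> > 0" shows "gamma (omega_sy \<omega> \<sigma> y) \<ge> 0"
  unfolding gamma_eq[OF s] using K_pos by (intro mult_nonneg_nonneg integral_nonneg) auto

lemma part_a: assumes s: "\<sigma> > 0"
  shows "gamma (omega_sy \<omega> \<sigma> y) \<le> 4 * \<sigma>"
proof -
  define b where "b = beta (omega_sy \<omega> \<sigma> y)"
  define H where "H z = hh (y + \<sigma> *\<^sub>R z)" for z
  have Hc: "continuous_on UNIV H" unfolding H_def by (intro continuous_intros hh_cont)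
  have Vi: "integrable lborel (\<lambda>z. \<omega> z ^ 6 *\<^sub>R H z)" by (rule int_w[OF Hc])
  have bdef: "b = (1/K) *\<^sub>R (\<integral>z. \<omega> z ^ 6 *\<^sub>R H z \<partial>lborel)"
    unfolding b_def beta_eq[OF s] H_def ..
  have pw: "norm (H z - b) \<le> 4 * \<sigma>" if z: "norm z < 1" for z
  proof -
    have Ki: "integrable lborel (\<lambda>z'. \<omega> z' ^ 6 *\<^sub>R H z)" by (rule int_w) (rule continuous_on_const)
    have "(\<integral>z'. \<omega> z' ^ 6 *\<^sub>R (H z - H z') \<partial>lborel)
        = (\<integral>z'. \<omega> z' ^ 6 *\<^sub>R H z \<partial>lborel) - (\<integral>z'. \<omega> z' ^ 6 *\<^sub>R H z' \<partial>lborel)"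
      using Ki Vi by (simp add: scaleR_diff_right)
    also have "(\<integral>z'. \<omega> z' ^ 6 *\<^sub>R H z \<partial>lborel) = K *\<^sub>R H z"
      unfolding K_def by (rule integral_scaleR_left) (use int_w_real[of "\<lambda>_. 1"] in simp)
    finally have eq: "H z - b = (1/K) *\<^sub>R (\<integral>z'. \<omega> z' ^ 6 *\<^sub>R (H z - H z') \<partial>lborel)"
      unfolding bdef using K_pos by (simp add: scaleR_diff_right)
    have "norm (\<integral>z'. \<omega> z' ^ 6 *\<^sub>R (H z - H z') \<partial>lborel) \<le> (\<integral>z'. \<omega> z' ^ 6 * (4 * \<sigma>) \<partial>lborel)"
    proof (rule Bochner_Integration.integral_norm_bound_integral[where f="\<lambda>z'. \<omega> z' ^ 6 *\<^sub>R (H z - H z')" and g="\<lambda>z'. \<omega> z' ^ 6 * (4 * \<sigma>)"])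
      show "integrable lborel (\<lambda>z'. \<omega> z' ^ 6 *\<^sub>R (H z - H z'))"
        by (rule int_w) (intro continuous_intros Hc)
      show "integrable lborel (\<lambda>z'. \<omega> z' ^ 6 * (4 * \<sigma>))" by (rule int_w_real) simp
      fix z' show "norm (\<omega> z' ^ 6 *\<^sub>R (H z - H z')) \<le> \<omega> z' ^ 6 * (4 * \<sigma>)"
      proof (cases "\<omega> z' = 0")
        case False
        then have z': "norm z' < 1" by (rule supp0)
        have "norm (H z - H z') \<le> 2 * norm ((y + \<sigma> *\<^sub>R z) - (y + \<sigma> *\<^sub>R z')) / (1 + norm (y + \<sigma> *\<^sub>R z))"
          unfolding H_def by (rule hh_lip)
        also have "\<dots> \<le> 2 * norm ((y + \<sigma> *\<^sub>R z) - (y + \<sigma> *\<^sub>R z'))"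
          by (rule dls) auto
        also have "(y + \<sigma> *\<^sub>R z) - (y + \<sigma> *\<^sub>R z') = \<sigma> *\<^sub>R (z - z')" by (simp add: algebra_simps)
        also have "norm (\<sigma> *\<^sub>R (z - z')) \<le> \<sigma> * 2"
        proof -
          have "norm (z - z') \<le> 2" using norm_triangle_ineq4[of z z'] z z' by simp
          then show ?thesis using s by simp
        qed
        finally have "norm (H z - H z') \<le> 4 * \<sigma>" by simp
        then show ?thesis using nn[of z'] by (simp add: mult_left_mono)
      qed simp
    qed
    then show "norm (H z - b) \<le> 4 * \<sigma>"
      unfolding eq K_eq using K_pos by (simp add: divide_le_eq mult.commute)
  qed
  have "(\<integral>z. \<omega> z ^ 6 * norm (H z - b) \<partial>lborel) \<le> (\<integral>z. \<omega> z ^ 6 * (4 * \<sigma>) \<partial>lborel)"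
  proof (rule integral_mono)
    show "integrable lborel (\<lambda>z. \<omega> z ^ 6 * norm (H z - b))"
      by (rule int_w_real) (intro continuous_intros Hc)
    show "integrable lborel (\<lambda>z. \<omega> z ^ 6 * (4 * \<sigma>))" by (rule int_w_real) simp
    fix z show "\<omega> z ^ 6 * norm (H z - b) \<le> \<omega> z ^ 6 * (4 * \<sigma>)"
      using supp0[of z] pw[of z] nn[of z] by (cases "\<omega> z = 0") (auto intro: mult_left_mono)
  qed
  then have "(1/K) * (\<integral>z. \<omega> z ^ 6 * norm (H z - b) \<partial>lborel) \<le> (1/K) * (K * (4 * \<sigma>))"
    unfolding K_eq using K_pos by (intro mult_left_mono) auto
  then show ?thesis unfolding gamma_eq[OF s] H_def b_def using K_pos by simp
qed

end



context wset begin

definition J where "J \<sigma> = (1/K) * (\<integral>z. \<omega> z ^ 6 * (1 / (1 + \<sigma> * norm z)) \<partial>lborel)"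

lemma q_cont: "\<sigma> \<ge> 0 \<Longrightarrow> continuous_on UNIV (\<lambda>z::real^3. 1 / (1 + \<sigma> * norm z))"
  by (intro continuous_intros) (auto, smt (verit) mult_nonneg_nonneg norm_ge_zero)

lemma J_nonneg: "\<sigma> \<ge> 0 \<Longrightarrow> J \<sigma> \<ge> 0"
  unfolding J_def using K_pos nn by (intro mult_nonneg_nonneg integral_nonneg) (auto simp: add_pos_nonneg)

lemma J_lim: "(J \<longlongrightarrow> 0) at_top"
proof -
  define s where "s \<sigma> z = \<omega> z ^ 6 * (1 / (1 + \<sigma> * norm z))" for \<sigma> and z :: "real^3"
    have m1: "(\<lambda>z. 0::real) \<in> borel_measurable lborel" by simp
    have m2: "s t \<in> borel_measurable lborel" for t unfolding s_def by measurable
    have m3: "integrable lborel (\<lambda>z. \<omega> z ^ 6)" using int_w_real[of "\<lambda>_. 1"] by simp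
    have m4: "AE z in lborel. ((\<lambda>i. s i z) \<longlongrightarrow> 0) at_top"
      using AE_lborel_singleton[of 0]
    proof eventually_elim
      case (elim z)
      then have n: "norm z > 0" by simp
      show ?case unfolding s_def using n by real_asymp
    qed
    have m5: "\<forall>\<^sub>F i in at_top. AE z in lborel. norm (s i z) \<le> \<omega> z ^ 6"
      using eventually_ge_at_top[of "0::real"]
    proof eventually_elim
      case (elim i)
      show ?case
      proof (rule AE_I2)
        fix z :: "real^3"
        have n: "0 \<le> i * norm z" using elim by simp
        have "0 \<le> \<omega> z ^ 6 / (1 + i * norm z)" using n nn[of z] by simp
        then show "norm (s i z) \<le> \<omega> z ^ 6" unfolding s_def
          using dls[of "\<omega> z ^ 6" "i * norm z"] n nn[of z] by simp
      qed
    qed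
  have "((\<lambda>t. integral\<^sup>L lborel (s t)) \<longlongrightarrow> integral\<^sup>L lborel (\<lambda>z. 0::real)) at_top"
    using integral_dominated_convergence_at_top[OF m1 m2 m3 m4 m5] by simp
  then have "((\<lambda>t. (1/K) * integral\<^sup>L lborel (s t)) \<longlongrightarrow> (1/K) * 0) at_top"
    by (intro tendsto_mult tendsto_const) simp
  then show ?thesis unfolding J_def[abs_def] s_def by simp
qed

lemma hh_neg: "hh (- x) = - hh x" by (simp add: hh_def)

lemma odd0: "(\<integral>z. \<omega> z ^ 6 *\<^sub>R hh (\<sigma> *\<^sub>R z) \<partial>lborel) = 0"
proof -
  have i: "integrable lborel (\<lambda>z. \<omega> z ^ 6 *\<^sub>R hh (\<sigma> *\<^sub>R z))"
    by (rule int_w) (intro continuous_intros hh_cont)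
  have "(\<integral>z. \<omega> z ^ 6 *\<^sub>R hh (\<sigma> *\<^sub>R z) \<partial>lborel) = (\<integral>z. \<omega> (-z) ^ 6 *\<^sub>R hh (\<sigma> *\<^sub>R (-z)) \<partial>lborel)"
    using reflect[OF i] by simp
  also have "\<dots> = - (\<integral>z. \<omega> z ^ 6 *\<^sub>R hh (\<sigma> *\<^sub>R z) \<partial>lborel)"
    by (simp add: refl hh_neg)
  finally have "2 *\<^sub>R (\<integral>z. \<omega> z ^ 6 *\<^sub>R hh (\<sigma> *\<^sub>R z) \<partial>lborel) = 0"
    by (simp add: scaleR_2 eq_neg_iff_add_eq_0)
  then show ?thesis by simp
qed

lemma beta_bound: assumes s: "\<sigma> > 0"
  shows "norm (beta (omega_sy \<omega> \<sigma> y)) \<le> 2 * norm y * J \<sigma>"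
proof -
  have i1: "integrable lborel (\<lambda>z. \<omega> z ^ 6 *\<^sub>R hh (y + \<sigma> *\<^sub>R z))"
    by (rule int_w) (intro continuous_intros hh_cont)
  have i2: "integrable lborel (\<lambda>z. \<omega> z ^ 6 *\<^sub>R hh (\<sigma> *\<^sub>R z))"
    by (rule int_w) (intro continuous_intros hh_cont)
  have eq: "(\<integral>z. \<omega> z ^ 6 *\<^sub>R hh (y + \<sigma> *\<^sub>R z) \<partial>lborel)
      = (\<integral>z. \<omega> z ^ 6 *\<^sub>R (hh (y + \<sigma> *\<^sub>R z) - hh (\<sigma> *\<^sub>R z)) \<partial>lborel)"
    using i1 i2 odd0[of \<sigma>] by (simp add: scaleR_diff_right)
  have "norm (\<integral>z. \<omega> z ^ 6 *\<^sub>R (hh (y + \<sigma> *\<^sub>R z) - hh (\<sigma> *\<^sub>R z)) \<partial>lborel)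
      \<le> (\<integral>z. (2 * norm y) * (\<omega> z ^ 6 * (1 / (1 + \<sigma> * norm z))) \<partial>lborel)"
  proof (rule Bochner_Integration.integral_norm_bound_integral[where f="\<lambda>z. \<omega> z ^ 6 *\<^sub>R (hh (y + \<sigma> *\<^sub>R z) - hh (\<sigma> *\<^sub>R z))" and g="\<lambda>z. (2 * norm y) * (\<omega> z ^ 6 * (1 / (1 + \<sigma> * norm z)))"])
    show "integrable lborel (\<lambda>z. \<omega> z ^ 6 *\<^sub>R (hh (y + \<sigma> *\<^sub>R z) - hh (\<sigma> *\<^sub>R z)))"
      by (rule int_w) (intro continuous_intros hh_cont)
    show "integrable lborel (\<lambda>z. (2 * norm y) * (\<omega> z ^ 6 * (1 / (1 + \<sigma> * norm z))))"
      by (intro integrable_mult_right int_w_real q_cont) (use s in simp)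
    fix z
    have "norm (hh (\<sigma> *\<^sub>R z) - hh (y + \<sigma> *\<^sub>R z)) \<le> 2 * norm (\<sigma> *\<^sub>R z - (y + \<sigma> *\<^sub>R z)) / (1 + norm (\<sigma> *\<^sub>R z))"
      by (rule hh_lip)
    also have "\<dots> = 2 * norm y * (1 / (1 + \<sigma> * norm z))" using s by simp
    finally have "norm (hh (y + \<sigma> *\<^sub>R z) - hh (\<sigma> *\<^sub>R z)) \<le> 2 * norm y * (1 / (1 + \<sigma> * norm z))"
      by (simp add: norm_minus_commute)
    then show "norm (\<omega> z ^ 6 *\<^sub>R (hh (y + \<sigma> *\<^sub>R z) - hh (\<sigma> *\<^sub>R z))) \<le> (2 * norm y) * (\<omega> z ^ 6 * (1 / (1 + \<sigma> * norm z)))"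
    proof -
      have "norm (\<omega> z ^ 6 *\<^sub>R (hh (y + \<sigma> *\<^sub>R z) - hh (\<sigma> *\<^sub>R z))) = \<omega> z ^ 6 * norm (hh (y + \<sigma> *\<^sub>R z) - hh (\<sigma> *\<^sub>R z))"
        using nn[of z] by (simp only: norm_scaleR) simp
      also have "\<dots> \<le> \<omega> z ^ 6 * (2 * norm y * (1 / (1 + \<sigma> * norm z)))"
        by (rule mult_left_mono[OF \<open>norm (hh (y + \<sigma> *\<^sub>R z) - hh (\<sigma> *\<^sub>R z)) \<le> _\<close>]) (use nn[of z] in simp)
      finally show ?thesis by (simp add: algebra_simps)
    qed
  qed
  also have "(\<integral>z. (2 * norm y) * (\<omega> z ^ 6 * (1 / (1 + \<sigma> * norm z))) \<partial>lborel)
     = (2 * norm y) * (\<integral>z. \<omega> z ^ 6 * (1 / (1 + \<sigma> * norm z)) \<partial>lborel)"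
    by (rule integral_mult_right_zero)
  finally have *: "norm (\<integral>z. \<omega> z ^ 6 *\<^sub>R (hh (y + \<sigma> *\<^sub>R z) - hh (\<sigma> *\<^sub>R z)) \<partial>lborel)
     \<le> (2 * norm y) * (\<integral>z. \<omega> z ^ 6 * (1 / (1 + \<sigma> * norm z)) \<partial>lborel)" .
  have "norm (beta (omega_sy \<omega> \<sigma> y)) = (1/K) * norm (\<integral>z. \<omega> z ^ 6 *\<^sub>R (hh (y + \<sigma> *\<^sub>R z) - hh (\<sigma> *\<^sub>R z)) \<partial>lborel)"
    unfolding beta_eq[OF s] eq using K_pos by simp
  also have "\<dots> \<le> (1/K) * ((2 * norm y) * (\<integral>z. \<omega> z ^ 6 * (1 / (1 + \<sigma> * norm z)) \<partial>lborel))"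
    using * K_pos by (intro mult_left_mono) auto
  also have "\<dots> = 2 * norm y * J \<sigma>" unfolding J_def by simp
  finally show ?thesis .
qed

end



context wset begin

lemma gamma_upper: assumes s: "\<sigma> > 0"
  shows "gamma (omega_sy \<omega> \<sigma> y) \<le> 1 + norm (beta (omega_sy \<omega> \<sigma> y))"
proof -
  define b where "b = beta (omega_sy \<omega> \<sigma> y)"
  have "(\<integral>z. \<omega> z ^ 6 * norm (hh (y + \<sigma> *\<^sub>R z) - b) \<partial>lborel) \<le> (\<integral>z. \<omega> z ^ 6 * (1 + norm b) \<partial>lborel)"
  proof (rule integral_mono)
    show "integrable lborel (\<lambda>z. \<omega> z ^ 6 * norm (hh (y + \<sigma> *\<^sub>R z) - b))"
      by (rule int_w_real) (intro continuous_intros hh_cont)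
    show "integrable lborel (\<lambda>z. \<omega> z ^ 6 * (1 + norm b))" by (rule int_w_real) simp
    fix z
    have "norm (hh (y + \<sigma> *\<^sub>R z) - b) \<le> 1 + norm b"
      using norm_triangle_ineq4[of "hh (y + \<sigma> *\<^sub>R z)" b] hh_norm_le[of "y + \<sigma> *\<^sub>R z"] by simp
    then show "\<omega> z ^ 6 * norm (hh (y + \<sigma> *\<^sub>R z) - b) \<le> \<omega> z ^ 6 * (1 + norm b)"
      using nn[of z] by (intro mult_left_mono) auto
  qed
  then have "(1/K) * (\<integral>z. \<omega> z ^ 6 * norm (hh (y + \<sigma> *\<^sub>R z) - b) \<partial>lborel) \<le> (1/K) * (K * (1 + norm b))"
    unfolding K_eq using K_pos by (intro mult_left_mono) auto
  then show ?thesis unfolding gamma_eq[OF s] b_def using K_pos by simp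
qed

lemma gamma_lower: assumes s: "\<sigma> > 0"
  shows "gamma (omega_sy \<omega> \<sigma> y) \<ge> 1 - norm (beta (omega_sy \<omega> \<sigma> y)) - (1 + 2 * norm y) * J \<sigma>"
proof -
  define b where "b = beta (omega_sy \<omega> \<sigma> y)"
  define q where "q z = 1 / (1 + \<sigma> * norm z)" for z :: "real^3"
  define c where "c = 1 + 2 * norm y"
  have qi: "integrable lborel (\<lambda>z. \<omega> z ^ 6 * q z)"
    unfolding q_def by (rule int_w_real) (rule q_cont, use s in simp)
  have pw: "1 - norm b - c * q z \<le> norm (hh (y + \<sigma> *\<^sub>R z) - b)" for z
  proof -
    have "norm (hh (\<sigma> *\<^sub>R z) - hh (y + \<sigma> *\<^sub>R z)) \<le> 2 * norm (\<sigma> *\<^sub>R z - (y + \<sigma> *\<^sub>R z)) / (1 + norm (\<sigma> *\<^sub>R z))"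
      by (rule hh_lip)
    also have "\<dots> = 2 * norm y * q z" using s by (simp add: q_def)
    finally have 1: "norm (hh (\<sigma> *\<^sub>R z) - hh (y + \<sigma> *\<^sub>R z)) \<le> 2 * norm y * q z" .
    have 2: "norm (hh (\<sigma> *\<^sub>R z)) = 1 - q z" using s by (simp add: hh_norm q_def)
    have 3: "norm (hh (\<sigma> *\<^sub>R z)) \<le> norm (hh (y + \<sigma> *\<^sub>R z)) + norm (hh (\<sigma> *\<^sub>R z) - hh (y + \<sigma> *\<^sub>R z))"
      by (rule norm_triangle_sub)
    have 4: "norm (hh (y + \<sigma> *\<^sub>R z)) \<le> norm (hh (y + \<sigma> *\<^sub>R z) - b) + norm b"
      using norm_triangle_ineq2[of "hh (y + \<sigma> *\<^sub>R z)" b] by simp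
    show ?thesis using 1 2 3 4 unfolding c_def by (simp add: algebra_simps)
  qed
  have "(\<integral>z. \<omega> z ^ 6 * (1 - norm b) - c * (\<omega> z ^ 6 * q z) \<partial>lborel) \<le> (\<integral>z. \<omega> z ^ 6 * norm (hh (y + \<sigma> *\<^sub>R z) - b) \<partial>lborel)"
  proof (rule integral_mono)
    show "integrable lborel (\<lambda>z. \<omega> z ^ 6 * norm (hh (y + \<sigma> *\<^sub>R z) - b))"
      by (rule int_w_real) (intro continuous_intros hh_cont)
    show "integrable lborel (\<lambda>z. \<omega> z ^ 6 * (1 - norm b) - c * (\<omega> z ^ 6 * q z))"
      using int_w_real[of "\<lambda>_. 1 - norm b"] qi by (intro Bochner_Integration.integrable_diff integrable_mult_right) auto
    fix z
    have "\<omega> z ^ 6 * (1 - norm b - c * q z) \<le> \<omega> z ^ 6 * norm (hh (y + \<sigma> *\<^sub>R z) - b)"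
      using nn[of z] pw[of z] by (intro mult_left_mono) auto
    then show "\<omega> z ^ 6 * (1 - norm b) - c * (\<omega> z ^ 6 * q z) \<le> \<omega> z ^ 6 * norm (hh (y + \<sigma> *\<^sub>R z) - b)"
      by (simp add: algebra_simps)
  qed
  also have "(\<integral>z. \<omega> z ^ 6 * (1 - norm b) - c * (\<omega> z ^ 6 * q z) \<partial>lborel) = K * (1 - norm b) - c * (\<integral>z. \<omega> z ^ 6 * q z \<partial>lborel)"
    using int_w_real[of "\<lambda>_. 1 - norm b"] qi by (simp add: K_eq K_def)
  finally have "K * (1 - norm b) - c * (\<integral>z. \<omega> z ^ 6 * q z \<partial>lborel) \<le> (\<integral>z. \<omega> z ^ 6 * norm (hh (y + \<sigma> *\<^sub>R z) - b) \<partial>lborel)" .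
  then have "(1/K) * (K * (1 - norm b) - c * (\<integral>z. \<omega> z ^ 6 * q z \<partial>lborel)) \<le> (1/K) * (\<integral>z. \<omega> z ^ 6 * norm (hh (y + \<sigma> *\<^sub>R z) - b) \<partial>lborel)"
    using K_pos by (intro mult_left_mono) auto
  moreover have "(1/K) * (K * (1 - norm b) - c * (\<integral>z. \<omega> z ^ 6 * q z \<partial>lborel)) = 1 - norm b - c * J \<sigma>"
    unfolding J_def q_def using K_pos by (simp add: field_simps)
  ultimately show ?thesis unfolding gamma_eq[OF s] b_def c_def by simp
qed

lemma part_b_bounds: assumes s: "\<sigma> > 0" and y: "norm y \<le> r"
  shows "1 - (1 + 4 * r) * J \<sigma> \<le> gamma (omega_sy \<omega> \<sigma> y)"
    and "gamma (omega_sy \<omega> \<sigma> y) \<le> 1 + 2 * r * J \<sigma>"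
proof -
  have J0: "J \<sigma> \<ge> 0" using J_nonneg s by simp
  have b: "norm (beta (omega_sy \<omega> \<sigma> y)) \<le> 2 * r * J \<sigma>"
    using beta_bound[OF s, of y] mult_right_mono[OF y J0] by simp
  have "(1 + 2 * norm y) * J \<sigma> \<le> (1 + 2 * r) * J \<sigma>" using y J0 by (intro mult_right_mono) auto
  then show "1 - (1 + 4 * r) * J \<sigma> \<le> gamma (omega_sy \<omega> \<sigma> y)"
    using gamma_lower[OF s, of y] b by (simp add: algebra_simps)
  show "gamma (omega_sy \<omega> \<sigma> y) \<le> 1 + 2 * r * J \<sigma>"
    using gamma_upper[OF s, of y] b by simp
qed

end

theorem lemma3p8:
  fixes \<omega> :: "real^3 \<Rightarrow> real"
  assumes smooth: "smooth3 \<omega>"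
    and supp: "compact (closure {x. \<omega> x \<noteq> 0})" "closure {x. \<omega> x \<noteq> 0} \<subseteq> ball 0 1"
    and nonzero: "\<exists>x. \<omega> x \<noteq> 0"
    and nonneg: "\<And>x. \<omega> x \<ge> 0"
    and radial: "\<And>x1 x2. norm x1 = norm x2 \<Longrightarrow> \<omega> x1 = \<omega> x2"
    and mono: "\<And>x1 x2. norm x1 \<le> norm x2 \<Longrightarrow> \<omega> x1 \<ge> \<omega> x2"
  shows "((\<lambda>\<sigma>. SUP y. gamma (omega_sy \<omega> \<sigma> y)) \<longlongrightarrow> 0) (at_right 0)
     \<and> (\<forall>r>0. ((\<lambda>\<sigma>. INF y\<in>cball 0 r. gamma (omega_sy \<omega> \<sigma> y)) \<longlongrightarrow> 1) at_top)
     \<and> (\<forall>y \<sigma>. y \<noteq> 0 \<longrightarrow> \<sigma> > 0 \<longrightarrow> beta (omega_sy \<omega> \<sigma> y) \<bullet> y > 0)"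
proof -
  have cont: "continuous_on UNIV \<omega>"
    using smooth by (cases rule: smooth3.cases)
      (auto intro!: continuous_at_imp_continuous_on differentiable_imp_continuous_within)
  have supp0: "norm x < 1" if "\<omega> x \<noteq> 0" for x
    using supp(2) closure_subset[of "{x. \<omega> x \<noteq> 0}"] that by auto
  have refl: "\<omega> (- x) = \<omega> x" for x by (rule radial) simp
  obtain x0 where x0: "\<omega> x0 \<noteq> 0" using nonzero by blast
  have pos0: "\<omega> 0 > 0"
    using x0 nonneg[of x0] mono[of 0 x0] by simp
  interpret wset \<omega>
    by unfold_locales (use cont supp0 nonneg refl pos0 in auto)
  have A: "((\<lambda>\<sigma>. SUP y. gamma (omega_sy \<omega> \<sigma> y)) \<longlongrightarrow> 0) (at_right 0)"
  proof (rule tendsto_sandwich[where f="\<lambda>_. 0" and h="\<lambda>\<sigma>. 4 * \<sigma>"])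
    show "\<forall>\<^sub>F \<sigma> in at_right 0. 0 \<le> (SUP y. gamma (omega_sy \<omega> \<sigma> y))"
      using eventually_at_right_less[of "0::real"]
    proof eventually_elim
      case (elim \<sigma>)
      have "bdd_above (range (\<lambda>y. gamma (omega_sy \<omega> \<sigma> y)))"
        using part_a[OF elim] by (intro bdd_aboveI2) auto
      then have "gamma (omega_sy \<omega> \<sigma> 0) \<le> (SUP y. gamma (omega_sy \<omega> \<sigma> y))"
        by (rule cSUP_upper[OF UNIV_I])
      then show ?case using gamma_nonneg[OF elim, of 0] by simp
    qed
    show "\<forall>\<^sub>F \<sigma> in at_right 0. (SUP y. gamma (omega_sy \<omega> \<sigma> y)) \<le> 4 * \<sigma>"
      using eventually_at_right_less[of "0::real"]
    proof eventually_elim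
      case (elim \<sigma>)
      show ?case by (rule cSUP_least) (use part_a[OF elim] in auto)
    qed
    show "((\<lambda>_. 0::real) \<longlongrightarrow> 0) (at_right 0)" by simp
    have "((\<lambda>\<sigma>::real. 4 * \<sigma>) \<longlongrightarrow> 4 * 0) (at_right 0)"
      by (intro tendsto_intros)
    then show "((\<lambda>\<sigma>::real. 4 * \<sigma>) \<longlongrightarrow> 0) (at_right 0)" by simp
  qed
  have B: "((\<lambda>\<sigma>. INF y\<in>cball 0 r. gamma (omega_sy \<omega> \<sigma> y)) \<longlongrightarrow> 1) at_top" if r: "r > 0" for r
  proof (rule tendsto_sandwich[where f="\<lambda>\<sigma>. 1 - (1 + 4 * r) * J \<sigma>" and h="\<lambda>\<sigma>. 1 + 2 * r * J \<sigma>"])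
    show "\<forall>\<^sub>F \<sigma> in at_top. 1 - (1 + 4 * r) * J \<sigma> \<le> (INF y\<in>cball 0 r. gamma (omega_sy \<omega> \<sigma> y))"
      using eventually_gt_at_top[of "0::real"]
    proof eventually_elim
      case (elim \<sigma>)
      show ?case by (rule cINF_greatest) (use part_b_bounds(1)[OF elim] r in auto)
    qed
    show "\<forall>\<^sub>F \<sigma> in at_top. (INF y\<in>cball 0 r. gamma (omega_sy \<omega> \<sigma> y)) \<le> 1 + 2 * r * J \<sigma>"
      using eventually_gt_at_top[of "0::real"]
    proof eventually_elim
      case (elim \<sigma>)
      have "bdd_below ((\<lambda>y. gamma (omega_sy \<omega> \<sigma> y)) ` cball 0 r)"
        using part_b_bounds(1)[OF elim] by (intro bdd_belowI2) auto
      then have "(INF y\<in>cball 0 r. gamma (omega_sy \<omega> \<sigma> y)) \<le> gamma (omega_sy \<omega> \<sigma> 0)"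
        by (rule cINF_lower) (use r in simp)
      also have "\<dots> \<le> 1 + 2 * r * J \<sigma>" using part_b_bounds(2)[OF elim, of 0 r] r by simp
      finally show ?case .
    qed
    have "((\<lambda>\<sigma>. 1 - (1 + 4 * r) * J \<sigma>) \<longlongrightarrow> 1 - (1 + 4 * r) * 0) at_top"
      by (intro tendsto_intros J_lim)
    then show "((\<lambda>\<sigma>. 1 - (1 + 4 * r) * J \<sigma>) \<longlongrightarrow> 1) at_top" by simp
    have "((\<lambda>\<sigma>. 1 + 2 * r * J \<sigma>) \<longlongrightarrow> 1 + 2 * r * 0) at_top"
      by (intro tendsto_intros J_lim)
    then show "((\<lambda>\<sigma>. 1 + 2 * r * J \<sigma>) \<longlongrightarrow> 1) at_top" by simp
  qed
  show ?thesis using A B part_c by blast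
qed

end
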